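(* Let $f:\mathbb{R}^n\to\mathbb{R}$ be a continuous convex function, $X_0\in\mathbb{R}^n$ and $R>0$, and let $B(X_0,R)$ be the open ball centered at $X_0$ of radius $R$. Suppose there exists $\underline{d}>0$ such that for all $X\in B(X_0,R)$ and all $d_X\in\partial f(X)$ one has $\|d_X\|\ge \underline{d}$. Then there exist $X\in B(X_0,R)$ and $d_X\in\partial f(X)$ such that $$X-X_0=-\frac{R}{2}\cdot\frac{d_X}{\|d_X\|}.$$
   Context: $\partial f(X)$ denotes the subdifferential (set of subgradients) of the convex function $f$ at $X$. *)

theory Defs
  imports "HOL-Analysis.Analysis"
begin

definition subdifferential :: "('a::real_inner \<Rightarrow> real) \<Rightarrow> 'a \<Rightarrow> 'a set" where
  "subdifferential f x = {d. \<forall>y. f y \<ge> f x + d \<bullet> (y - x)}"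

end

theory Submission
  imports Defs
begin

theorem lemma2p2:
  fixes f :: "real ^ 'n \<Rightarrow> real" and X0 :: "real ^ 'n" and R dlow :: real
  assumes "continuous_on UNIV f"
    and "convex_on UNIV f"
    and "R > 0"
    and "dlow > 0"
    and "\<forall>X \<in> ball X0 R. \<forall>dX \<in> subdifferential f X. norm dX \<ge> dlow"
  shows "\<exists>X \<in> ball X0 R. \<exists>dX \<in> subdifferential f X.
           X - X0 = - (R / 2) *\<^sub>R ((1 / norm dX) *\<^sub>R dX)"
proof -
  define r where "r = R / 2"
  have r: "r > 0" "r < R" using assms(3) by (auto simp: r_def)
  obtain Xs where Xs: "Xs \<in> cball X0 r" "\<And>y. y \<in> cball X0 r \<Longrightarrow> f Xs \<le> f y"
  proof -
    have "cball X0 r \<noteq> {}" using r by auto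
    then show ?thesis using that continuous_attains_inf[of "cball X0 r" f] continuous_on_subset[OF assms(1)]
      by (meson compact_cball subset_UNIV)
  qed
  define E where "E = epigraph UNIV f"
  define K where "K = cball X0 r \<times> {..<f Xs}"
  have cE: "convex E" unfolding E_def using assms(2) by (rule convex_epigraphI)
  have cK: "convex K" unfolding K_def
    by (intro convex_Times convex_cball) (rule convex_real_interval)
  have nE: "E \<noteq> {}" unfolding E_def epigraph_def by auto
  have nK: "K \<noteq> {}" proof -
    have "(Xs, f Xs - 1) \<in> K" unfolding K_def using Xs(1) by simp
    then show ?thesis by blast
  qed
  have dEK: "E \<inter> K = {}"
  proof (rule ccontr)
    assume "E \<inter> K \<noteq> {}"
    then obtain y t where "(y, t) \<in> E" "(y, t) \<in> K" by auto
    then have "f y \<le> t" "y \<in> cball X0 r" "t < f Xs" unfolding E_def K_def epigraph_def by auto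
    with Xs(2)[of y] show False by simp
  qed
  obtain p c where p: "p \<noteq> 0" "\<forall>x\<in>K. inner p x \<le> c" "\<forall>x\<in>E. inner p x \<ge> c"
    using separating_hyperplane_sets[OF cK cE nK nE] dEK by blast
  obtain a b where ab: "p = (a, b)" by (cases p)
  have E1: "inner a y + b * t \<ge> c" if "f y \<le> t" for y t
    using p(3) that unfolding E_def epigraph_def ab by auto
  have K1: "inner a z + b * s \<le> c" if "z \<in> cball X0 r" "s < f Xs" for z s
    using p(2) that unfolding K_def ab by auto
  have b0: "b \<ge> 0"
    using E1[of Xs "f Xs"] K1[OF Xs(1), of "f Xs - 1"] by (simp add: algebra_simps)
  have "b \<noteq> 0"
  proof
    assume "b = 0"
    then have "a \<noteq> 0" using p(1) ab by (auto simp: zero_prod_def)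
    have "inner a (Xs - a) \<ge> c" using E1[of "Xs - a" "f (Xs - a)"] \<open>b = 0\<close> by simp
    moreover have "inner a Xs \<le> c" using K1[OF Xs(1), of "f Xs - 1"] \<open>b = 0\<close> by simp
    moreover have "inner a a > 0" using \<open>a \<noteq> 0\<close> by simp
    ultimately show False by (simp add: inner_diff_right)
  qed
  with b0 have bpos: "b > 0" by simp
  have K2: "inner a z + b * f Xs \<le> c" if "z \<in> cball X0 r" for z
  proof (rule ccontr)
    assume nt: "\<not> ?thesis"
    define s where "s = f Xs - (inner a z + b * f Xs - c) / (2 * b)"
    have "s < f Xs" using nt bpos by (simp add: s_def)
    have "inner a z + b * s = (inner a z + b * f Xs + c) / 2"
      using bpos unfolding s_def by (simp add: field_simps)
    with K1[OF that \<open>s < f Xs\<close>] nt show False by argo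
  qed
  define d where "d = - (1 / b) *\<^sub>R a"
  have sub: "d \<in> subdifferential f Xs"
    unfolding subdifferential_def
  proof (safe)
    fix y
    have "inner a y + b * f y \<ge> inner a Xs + b * f Xs"
      using E1[of y "f y"] K2[OF Xs(1)] by simp
    then have "b * f y \<ge> b * f Xs - inner a (y - Xs)" by (simp add: inner_diff_right)
    then have "f y \<ge> f Xs - inner a (y - Xs) / b" using bpos by (simp add: field_simps)
    then show "f Xs + d \<bullet> (y - Xs) \<le> f y" unfolding d_def by simp
  qed
  have XsB: "Xs \<in> ball X0 R" using Xs(1) r by auto
  have nd: "norm d \<ge> dlow" using assms(5) XsB sub by blast
  with assms(4) have ndp: "norm d > 0" by linarith
  have max: "inner d z \<ge> inner d Xs" if "z \<in> cball X0 r" for z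
  proof -
    have "inner a z \<le> inner a Xs" using K2[OF that] E1[of Xs "f Xs"] by simp
    then show ?thesis using bpos unfolding d_def by (simp add: field_simps)
  qed
  define z where "z = X0 - (r / norm d) *\<^sub>R d"
  have "z \<in> cball X0 r" using r ndp by (simp add: z_def dist_norm)
  from max[OF this] have i1: "inner d (Xs - X0) \<le> - r * norm d"
    using ndp by (simp add: z_def inner_diff_right power2_norm_eq_inner[symmetric] power2_eq_square inner_commute)
  have nX: "norm (Xs - X0) \<le> r" using Xs(1) by (simp add: dist_norm norm_minus_commute)
  define w where "w = (Xs - X0) + (r / norm d) *\<^sub>R d"
  have "inner w w = inner (Xs - X0) (Xs - X0) + 2 * (r / norm d) * inner d (Xs - X0) + (r / norm d)^2 * inner d d"
    unfolding w_def by (simp add: inner_add_left inner_add_right inner_commute power2_eq_square algebra_simps diff_divide_distrib)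
  also have "\<dots> = (norm (Xs - X0))^2 + 2 * (r / norm d) * inner d (Xs - X0) + r^2"
    using ndp by (simp add: power2_norm_eq_inner[symmetric] power_divide)
  also have "\<dots> \<le> r^2 + 2 * (r / norm d) * (- r * norm d) + r^2"
  proof -
    have "(norm (Xs - X0))^2 \<le> r^2" using nX by (simp add: power_mono)
    moreover have "2 * (r / norm d) * inner d (Xs - X0) \<le> 2 * (r / norm d) * (- r * norm d)"
      using i1 r ndp by (intro mult_left_mono) auto
    ultimately show ?thesis by linarith
  qed
  also have "\<dots> = 0" using ndp by (simp add: power2_eq_square)
  finally have "w = 0" using inner_gt_zero_iff[of w] by linarith
  then have "Xs - X0 = - (R / 2) *\<^sub>R ((1 / norm d) *\<^sub>R d)"
    unfolding w_def r_def by (simp add: eq_neg_iff_add_eq_0)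
  then show ?thesis using XsB sub by blast
qed

end
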